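(* Let $M\in S_d^+$ with $\det M=1$. Then for each $\delta>0$, $$\mathcal P(\lambda_1(R^TMR)\le\delta)\le C'(d)\,\delta^d,$$ where $C'(d):=2d\,3^{d-1}C(d)$, $C(d)=2^d/\omega_d$, and $\omega_d$ is the volume of the $d$-dimensional Euclidean unit ball.
   Context: $S_d^+$ is the set of $d\times d$ symmetric positive definite matrices; $\|x\|_M:=\sqrt{x^TMx}$. $\lambda_1(M):=\min_{u\in\mathbb Z^d\setminus\{0\}}\|u\|_M$. $R$ is a random matrix in the orthogonal group $\mathcal O_d$ distributed according to the Haar probability measure, and $\mathcal P$ denotes probability. *)

theory Defs
  imports "HOL-Analysis.Analysis" "HOL-Probability.Probability"
begin

text \<open>Symmetric positive definite matrices S_d^+.\<close>
definition sym_posdef :: "real^'n^'n \<Rightarrow> bool" where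
  "sym_posdef A \<longleftrightarrow> transpose A = A \<and> (\<forall>x. x \<noteq> 0 \<longrightarrow> x \<bullet> (A *v x) > 0)"

text \<open>The norm induced by A: sqrt (x^T A x).\<close>
definition mnorm :: "real^'n^'n \<Rightarrow> real^'n \<Rightarrow> real" where
  "mnorm A x = sqrt (x \<bullet> (A *v x))"

text \<open>Integer lattice Z^d.\<close>
definition int_vecs :: "(real^'n) set" where
  "int_vecs = {u. \<forall>i. u $ i \<in> \<int>}"

text \<open>First successive minimum lambda_1(A) = min over nonzero integer u of mnorm A u.\<close>
definition lambda1 :: "real^'n^'n \<Rightarrow> real" where
  "lambda1 A = Inf {mnorm A u | u. u \<in> int_vecs \<and> u \<noteq> 0}"

text \<open>Haar probability measure on O_d, viewed as a Borel measure on d x d matrices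
  concentrated on the orthogonal group and invariant under left multiplication by
  orthogonal matrices (this characterises the Haar measure uniquely).\<close>
definition haar_orthogonal :: "(real^'n^'n) measure \<Rightarrow> bool" where
  "haar_orthogonal P \<longleftrightarrow>
     prob_space P \<and> sets P = sets borel \<and>
     measure P {R. orthogonal_matrix R} = 1 \<and>
     (\<forall>Q. orthogonal_matrix Q \<longrightarrow> distr P borel (\<lambda>R. Q ** R) = P)"

text \<open>omega_d: volume of the d-dimensional Euclidean unit ball.\<close>
definition omega :: "'n::finite itself \<Rightarrow> real" where
  "omega _ = measure lborel (ball (0::real^'n) 1)"

definition C_const :: "'n::finite itself \<Rightarrow> real" where
  "C_const n = 2 ^ CARD('n) / omega n"

definition C'_const :: "'n::finite itself \<Rightarrow> real" where
  "C'_const n = 2 * real CARD('n) * 3 ^ (CARD('n) - 1) * C_const n"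

end

theory Submission
  imports Defs
begin

(* ---- L1 ---- *)


proposition
 fixes f :: "real^'n \<Rightarrow> real^'n"
  assumes "linear f" "S \<in> lmeasurable"
  shows measurable_linear_image_gen: "(f ` S) \<in> lmeasurable"
    and measure_linear_image_gen: "measure lebesgue (f ` S) = \<bar>det (matrix f)\<bar> * measure lebesgue S" (is "?Q f S")
proof -
  have "\<forall>S \<in> lmeasurable. (f ` S) \<in> lmeasurable \<and> ?Q f S"
  proof (rule induct_linear_elementary [OF \<open>linear f\<close>]; intro ballI)
    fix f g and S :: "(real,'n) vec set"
    assume "linear f" and "linear g"
      and f [rule_format]: "\<forall>S \<in> lmeasurable. f ` S \<in> lmeasurable \<and> ?Q f S"
      and g [rule_format]: "\<forall>S \<in> lmeasurable. g ` S \<in> lmeasurable \<and> ?Q g S"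
      and S: "S \<in> lmeasurable"
    then have gS: "g ` S \<in> lmeasurable"
      by blast
    show "(f \<circ> g) ` S \<in> lmeasurable \<and> ?Q (f \<circ> g) S"
      using f [OF gS] g [OF S] matrix_compose [OF \<open>linear g\<close> \<open>linear f\<close>]
      by (simp add: o_def image_comp abs_mult det_mul)
  next
    fix f :: "real^'n::_ \<Rightarrow> real^'n::_" and i and S :: "(real^'n::_) set"
    assume "linear f" and 0: "\<And>x. f x $ i = 0" and "S \<in> lmeasurable"
    then have "\<not> inj f"
      by (metis (full_types) linear_injective_imp_surjective one_neq_zero surjE vec_component)
    have detf: "det (matrix f) = 0"
      using \<open>\<not> inj f\<close> det_nz_iff_inj[OF \<open>linear f\<close>] by blast
    show "f ` S \<in> lmeasurable \<and> ?Q f S"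
    proof
      show "f ` S \<in> lmeasurable"
        using lmeasurable_iff_indicator_has_integral \<open>linear f\<close> \<open>\<not> inj f\<close> negligible_UNIV negligible_linear_singular_image by blast
      have "measure lebesgue (f ` S) = 0"
        by (meson \<open>\<not> inj f\<close> \<open>linear f\<close> negligible_imp_measure0 negligible_linear_singular_image)
      also have "\<dots> = \<bar>det (matrix f)\<bar> * measure lebesgue S"
        by (simp add: detf)
      finally show "?Q f S" .
    qed
  next
    fix c and S :: "(real^'n::_) set"
    assume "S \<in> lmeasurable"
    show "(\<lambda>a. \<chi> i. c i * a $ i) ` S \<in> lmeasurable \<and> ?Q (\<lambda>a. \<chi> i. c i * a $ i) S"
    proof
      show "(\<lambda>a. \<chi> i. c i * a $ i) ` S \<in> lmeasurable"
        by (simp add: \<open>S \<in> lmeasurable\<close> measurable_stretch)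
      show "?Q (\<lambda>a. \<chi> i. c i * a $ i) S"
        by (simp add: measure_stretch [OF \<open>S \<in> lmeasurable\<close>, of c] axis_def matrix_def det_diagonal)
    qed
  next
    fix m :: "'n" and n :: "'n" and S :: "(real, 'n) vec set"
    assume "m \<noteq> n" and "S \<in> lmeasurable"
    let ?h = "\<lambda>v::(real, 'n) vec. \<chi> i. v $ Transposition.transpose m n i"
    have lin: "linear ?h"
      by (rule linearI) (simp_all add: plus_vec_def scaleR_vec_def)
    have meq: "measure lebesgue ((\<lambda>v::(real, 'n) vec. \<chi> i. v $ Transposition.transpose m n i) ` cbox a b)
             = measure lebesgue (cbox a b)" for a b
    proof (cases "cbox a b = {}")
      case True then show ?thesis
        by simp
    next
      case False
      then have him: "?h ` (cbox a b) \<noteq> {}"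
        by blast
      have eq: "?h ` (cbox a b) = cbox (?h a) (?h b)"
        by (auto simp: image_iff lambda_swap_Galois mem_box_cart) (metis transpose_involutory)+
      show ?thesis
        using him prod.permute [OF permutes_swap_id, where S=UNIV and g="\<lambda>i. (b - a)$i", symmetric]
        by (simp add: eq content_cbox_cart False)
    qed
    have "(\<chi> i j. if Transposition.transpose m n i = j then 1 else 0) = (\<chi> i j. if j = Transposition.transpose m n i then 1 else (0::real))"
      by (auto intro!: Cart_lambda_cong)
    then have "matrix ?h = transpose(\<chi> i j. mat 1 $ i $ Transposition.transpose m n j)"
      by (auto simp: matrix_eq transpose_def axis_def mat_def matrix_def)
    then have 1: "\<bar>det (matrix ?h)\<bar> = 1"
      by (simp add: det_permute_columns permutes_swap_id sign_swap_id abs_mult)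
    show "?h ` S \<in> lmeasurable \<and> ?Q ?h S"
      using measure_linear_sufficient [OF lin \<open>S \<in> lmeasurable\<close>] meq 1 by force
  next
    fix m n :: "'n" and S :: "(real, 'n) vec set"
    assume "m \<noteq> n" and "S \<in> lmeasurable"
    let ?h = "\<lambda>v::(real, 'n) vec. \<chi> i. if i = m then v $ m + v $ n else v $ i"
    have lin: "linear ?h"
      by (rule linearI) (auto simp: algebra_simps plus_vec_def scaleR_vec_def vec_eq_iff)
    have mh: "matrix ?h = (\<chi> k. if k = m then row m (mat 1) + 1 *s row n (mat 1) else row k (mat 1))"
      using \<open>m \<noteq> n\<close> by (auto simp: matrix_def axis_def mat_def row_def vec_eq_iff)
    have 1: "det(matrix ?h) = 1"
      unfolding mh using det_row_operation[OF \<open>m \<noteq> n\<close>, of "mat 1" 1] by simp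
    have meq: "measure lebesgue (?h ` (cbox a b)) = measure lebesgue (cbox a b)" for a b
    proof (cases "cbox a b = {}")
      case True then show ?thesis by simp
    next
      case False
      then have ne: "(+) (\<chi> i. if i = n then - a $ n else 0) ` cbox a b \<noteq> {}"
        by auto
      let ?v = "\<chi> i. if i = n then - a $ n else 0"
      have "?h ` cbox a b
            = (+) (\<chi> i. if i = m \<or> i = n then a $ n else 0) ` ?h ` (+) ?v ` (cbox a b)"
        using \<open>m \<noteq> n\<close> unfolding image_comp o_def by (force simp: vec_eq_iff)
      then have "measure lebesgue (?h ` (cbox a b))
               = measure lebesgue ((\<lambda>v. \<chi> i. if i = m then v $ m + v $ n else v $ i) `
                                   (+) ?v ` cbox a b)"
        by (rule ssubst) (rule measure_translation)
      also have "\<dots> = measure lebesgue ((\<lambda>v. \<chi> i. if i = m then v $ m + v $ n else v $ i) ` cbox (?v +a) (?v + b))"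
        by (metis (no_types, lifting) cbox_translation)
      also have "\<dots> = measure lebesgue ((+) ?v ` cbox a b)"
        apply (subst measure_shear_interval)
        using \<open>m \<noteq> n\<close> ne apply auto
        apply (simp add: cbox_translation)
        by (metis cbox_borel cbox_translation measure_completion sets_lborel)
      also have "\<dots> = measure lebesgue (cbox a b)"
        by (rule measure_translation)
        finally show ?thesis .
      qed
    show "?h ` S \<in> lmeasurable \<and> ?Q ?h S"
      using measure_linear_sufficient [OF lin \<open>S \<in> lmeasurable\<close>] meq 1 by force
  qed
  with assms show "(f ` S) \<in> lmeasurable" "?Q f S"
    by metis+
qed


(* ---- L2 ---- *)


lemma symA_inner:
  fixes A :: "real^'n^'n"
  assumes "transpose A = A"
  shows "x \<bullet> (A *v y) = y \<bullet> (A *v x)"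
proof -
  have "x \<bullet> (A *v y) = (x v* A) \<bullet> y" by (simp add: dot_lmul_matrix)
  also have "x v* A = transpose A *v x" by simp
  also have "\<dots> = A *v x" using assms by simp
  finally show ?thesis by (simp add: inner_commute)
qed

lemma A_orthonormal_set:
  fixes A :: "real^'n^'n"
  assumes "sym_posdef A" "k \<le> CARD('n)"
  shows "\<exists>S. finite S \<and> card S = k \<and> (\<forall>x\<in>S. \<forall>y\<in>S. x \<bullet> (A *v y) = (if x = y then 1 else 0))"
  using assms(2)
proof (induction k)
  case 0
  then show ?case by (intro exI[of _ "{}"]) auto
next
  case (Suc k)
  then obtain S where S: "finite S" "card S = k"
    and on: "\<forall>x\<in>S. \<forall>y\<in>S. x \<bullet> (A *v y) = (if x = y then 1 else 0)" by auto
  have sym: "transpose A = A" and pd: "\<And>x. x \<noteq> 0 \<Longrightarrow> x \<bullet> (A *v x) > 0"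
    using assms(1) by (auto simp: sym_posdef_def)
  have "dim ((\<lambda>s. A *v s) ` S) \<le> card ((\<lambda>s. A *v s) ` S)"
    using S by (intro dim_le_card') auto
  also have "\<dots> \<le> card S" using S by (intro card_image_le) auto
  also have "\<dots> < DIM(real^'n)" using S Suc.prems by simp
  finally obtain x where x: "x \<noteq> 0" "\<And>y. y \<in> span ((\<lambda>s. A *v s) ` S) \<Longrightarrow> orthogonal x y"
    using orthogonal_to_subspace_exists by blast
  have xs: "x \<bullet> (A *v s) = 0" if "s \<in> S" for s
    using x(2)[of "A *v s"] that by (auto simp: orthogonal_def span_base)
  define c where "c = x \<bullet> (A *v x)"
  have c: "c > 0" using pd[OF x(1)] by (simp add: c_def)
  define x' where "x' = (1 / sqrt c) *\<^sub>R x"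
  have x'x': "x' \<bullet> (A *v x') = 1"
    using c by (simp add: x'_def matrix_vector_mult_scaleR c_def[symmetric] field_simps) 
  have x's: "x' \<bullet> (A *v s) = 0" if "s \<in> S" for s
    using xs[OF that] by (simp add: x'_def)
  have sx': "s \<bullet> (A *v x') = 0" if "s \<in> S" for s
    using x's[OF that] symA_inner[OF sym, of s x'] by simp
  have notin: "x' \<notin> S" using x'x' x's by force
  show ?case
    apply (intro exI[of _ "insert x' S"])
    using S notin on x'x' x's sx' by auto
qed

lemma A_orthonormal_matrix:
  fixes A :: "real^'n^'n"
  assumes "sym_posdef A"
  obtains V :: "real^'n^'n" where "transpose V ** A ** V = mat 1"
proof -
  obtain S where S: "finite S" "card S = CARD('n)"
    and on: "\<forall>x\<in>S. \<forall>y\<in>S. x \<bullet> (A *v y) = (if x = y then 1 else 0)"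
    using A_orthonormal_set[OF assms, of "CARD('n)"] by auto
  obtain g where g: "bij_betw g (UNIV::'n set) S"
    using finite_same_card_bij[of "UNIV::'n set" S] S by auto
  define V :: "real^'n^'n" where "V = (\<chi> i j. g j $ i)"
  have gi: "g j \<in> S" for j using g by (auto simp: bij_betw_def)
  have ginj: "g j = g k \<longleftrightarrow> j = k" for j k using g by (auto simp: bij_betw_def inj_on_def)
  have "(transpose V ** A ** V) $ j $ k = g j \<bullet> (A *v g k)" for j k
    by (simp add: V_def matrix_matrix_mult_def matrix_vector_mult_def inner_vec_def transpose_def
        sum_distrib_left sum_distrib_right mult.assoc mult.left_commute)
     (subst sum.swap, simp add: mult.commute mult.left_commute)
  then have "transpose V ** A ** V = mat 1"
    using on gi ginj by (simp add: vec_eq_iff mat_def)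
  then show ?thesis by (rule that)
qed


(* ---- L3 ---- *)


lemma matrix_vec_inner_transpose:
  fixes V :: "real^'n^'m"
  shows "(V *v y) \<bullet> w = y \<bullet> (transpose V *v w)"
  using dot_lmul_matrix[of y "transpose V" w] by simp

lemma ellipsoid_volume:
  fixes A :: "real^'n^'n"
  assumes "sym_posdef A" "det A = 1" "r \<ge> 0"
  shows "{x. x \<bullet> (A *v x) \<le> r^2} \<in> lmeasurable"
    and "measure lebesgue {x. x \<bullet> (A *v x) \<le> r^2} = r ^ CARD('n) * omega TYPE('n)"
proof -
  obtain V :: "real^'n^'n" where V: "transpose V ** A ** V = mat 1"
    using A_orthonormal_matrix[OF assms(1)] by blast
  have "det (transpose V ** A ** V) = 1" using V by simp
  then have dV: "det V * det V = 1" using assms(2) by (simp add: det_mul)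
  then have adV: "\<bar>det V\<bar> = 1"
    using power2_eq_1_iff[of "det V"] by (auto simp: power2_eq_square)
  have inv: "invertible V" using dV by (auto simp: invertible_det_nz)
  then obtain W where W: "V ** W = mat 1" by (auto simp: invertible_def)
  have q: "(V *v y) \<bullet> (A *v (V *v y)) = y \<bullet> y" for y
  proof -
    have "(V *v y) \<bullet> (A *v (V *v y)) = y \<bullet> (transpose V *v (A *v (V *v y)))"
      by (rule matrix_vec_inner_transpose)
    also have "\<dots> = y \<bullet> ((transpose V ** A ** V) *v y)"
      by (metis matrix_vector_mul_assoc matrix_mul_assoc)
    finally show ?thesis using V by simp
  qed
  have E: "{x. x \<bullet> (A *v x) \<le> r^2} = (\<lambda>y. V *v y) ` cball 0 r"
  proof (intro set_eqI iffI)
    fix x assume "x \<in> {x. x \<bullet> (A *v x) \<le> r^2}"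
    then have x: "x \<bullet> (A *v x) \<le> r^2" by simp
    have xe: "x = V *v (W *v x)" using W by (simp add: matrix_vector_mul_assoc)
    have "norm (W *v x) ^ 2 \<le> r ^ 2"
      using x q[of "W *v x"] xe by (simp add: power2_norm_eq_inner)
    then have "norm (W *v x) \<le> r" using assms(3) by (simp add: power2_le_iff_abs_le)
    then show "x \<in> (\<lambda>y. V *v y) ` cball 0 r" using xe by (auto simp: dist_norm)
  next
    fix x assume "x \<in> (\<lambda>y. V *v y) ` cball 0 r"
    then obtain y where y: "norm y \<le> r" "x = V *v y" by (auto simp: dist_norm)
    have "norm y ^ 2 \<le> r ^ 2" using y(1) by (simp add: power_mono)
    then show "x \<in> {x. x \<bullet> (A *v x) \<le> r^2}"
      using q[of y] y(2) by (simp add: power2_norm_eq_inner)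
  qed
  have lin: "linear (\<lambda>y. V *v y)" by (simp add: matrix_vector_mul_linear)
  show "{x. x \<bullet> (A *v x) \<le> r^2} \<in> lmeasurable"
    unfolding E by (rule measurable_linear_image_gen[OF lin]) simp
  have "measure lebesgue {x. x \<bullet> (A *v x) \<le> r^2} = \<bar>det (matrix (\<lambda>y. V *v y))\<bar> * measure lebesgue (cball (0::real^'n) r)"
    unfolding E by (rule measure_linear_image_gen[OF lin]) simp
  also have "\<dots> = measure lborel (cball (0::real^'n) r)"
    using adV by (simp add: matrix_of_matrix_vector_mul)
  also have "\<dots> = r ^ CARD('n) * omega TYPE('n)"
    unfolding omega_def
    using content_ball_conv_unit_ball[of r "0::real^'n"] content_cball_conv_ball[of "0::real^'n" r] assms(3)
    by simp
  finally show "measure lebesgue {x. x \<bullet> (A *v x) \<le> r^2} = r ^ CARD('n) * omega TYPE('n)" .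
qed


(* ---- L4 ---- *)


lemma cont_transpose: "continuous_on UNIV (transpose :: real^'n^'m \<Rightarrow> real^'m^'n)"
  unfolding transpose_def
  by (intro continuous_on_vec_lambda continuous_on_component continuous_on_id)

lemma cont_mult: "continuous_on UNIV (\<lambda>z :: (real^'n^'m) \<times> (real^'k^'n). fst z ** snd z)"
  unfolding matrix_matrix_mult_def
  by (intro continuous_on_vec_lambda continuous_intros)

lemma cont_mv: "continuous_on UNIV (\<lambda>z :: (real^'n^'m) \<times> (real^'n). fst z *v snd z)"
  unfolding matrix_vector_mult_def
  by (intro continuous_on_vec_lambda continuous_intros)

lemma meas_transpose[measurable]: "(transpose :: real^'n^'m \<Rightarrow> real^'m^'n) \<in> borel_measurable borel"
  by (rule borel_measurable_continuous_onI[OF cont_transpose])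

lemma meas_mult_pair: "(\<lambda>z :: (real^'n^'m) \<times> (real^'k^'n). fst z ** snd z) \<in> borel_measurable borel"
  by (rule borel_measurable_continuous_onI[OF cont_mult])


(* ---- L5 ---- *)


lemma cont_lmult: "continuous_on UNIV (\<lambda>R. (Q::real^'n^'n) ** R)"
  unfolding matrix_matrix_mult_def
  by (intro continuous_on_vec_lambda continuous_intros)

lemma cont_rmult: "continuous_on UNIV (\<lambda>R. R ** (Q::real^'n^'n))"
  unfolding matrix_matrix_mult_def
  by (intro continuous_on_vec_lambda continuous_intros)

lemma meas_lmult[measurable]: "(\<lambda>R. (Q::real^'n^'n) ** R) \<in> borel_measurable borel"
  by (rule borel_measurable_continuous_onI[OF cont_lmult])

lemma meas_rmult[measurable]: "(\<lambda>R. R ** (Q::real^'n^'n)) \<in> borel_measurable borel"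
  by (rule borel_measurable_continuous_onI[OF cont_rmult])

lemma orth_set_borel[measurable]: "{R::real^'n^'n. orthogonal_matrix R} \<in> sets borel"
proof -
  have c: "continuous_on UNIV (\<lambda>R::real^'n^'n. transpose R ** R)"
    unfolding matrix_matrix_mult_def transpose_def
    by (intro continuous_on_vec_lambda continuous_intros)
  have "closed {R::real^'n^'n. transpose R ** R = mat 1}"
    by (rule closed_Collect_eq[OF c continuous_on_const])
  moreover have "{R::real^'n^'n. orthogonal_matrix R} = {R. transpose R ** R = mat 1}"
    by (auto simp: orthogonal_matrix)
  ultimately show ?thesis by simp
qed

locale haarP =
  fixes P :: "(real^'n^'n) measure"
  assumes haar: "haar_orthogonal P"
begin

lemma prob: "prob_space P" using haar by (simp add: haar_orthogonal_def)
lemma sP: "sets P = sets borel" using haar by (simp add: haar_orthogonal_def)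
lemma O1: "measure P {R. orthogonal_matrix R} = 1" using haar by (simp add: haar_orthogonal_def)
lemma linv: "orthogonal_matrix Q \<Longrightarrow> distr P borel (\<lambda>R. Q ** R) = P"
  using haar by (simp add: haar_orthogonal_def)

lemma measP[measurable_cong]: "sets P = sets borel" by (rule sP)

lemma AE_orth: "AE R in P. orthogonal_matrix R"
proof -
  interpret prob_space P by (rule prob)
  show ?thesis using AE_prob_1[OF O1] by simp
qed

lemma meas_P_borel: "f \<in> borel_measurable borel \<Longrightarrow> f \<in> borel_measurable P"
  using measurable_cong_sets[OF sP refl] by simp

lemma meas_P_borel': "f \<in> borel \<rightarrow>\<^sub>M (borel::'b::topological_space measure) \<Longrightarrow> f \<in> P \<rightarrow>\<^sub>M (borel::'b measure)"
  using measurable_cong_sets[OF sP refl] by simp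

lemma ind_distr:
  fixes M :: "(real^'n^'n) measure"
  assumes sM: "sets M = sets borel" and f: "f \<in> borel_measurable borel" and B: "B \<in> sets borel"
  shows "(\<integral>\<^sup>+x. indicator B (f x) \<partial>M) = emeasure (distr M borel f) B"
proof -
  have fM: "f \<in> M \<rightarrow>\<^sub>M borel" by (subst measurable_cong_sets[OF sM refl]) (rule f)
  have "emeasure (distr M borel f) B = (\<integral>\<^sup>+x. indicator B x \<partial>distr M borel f)"
    using B by (simp add: nn_integral_indicator)
  also have "\<dots> = (\<integral>\<^sup>+x. indicator B (f x) \<partial>M)"
    using B by (intro nn_integral_distr[OF fM]) simp
  finally show ?thesis by simp
qed

lemma tinv: "distr P borel transpose = P"
proof -
  interpret prob_space P by (rule prob)
  define \<nu> where "\<nu> = distr P borel (transpose :: real^'n^'n \<Rightarrow> real^'n^'n)"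
  have mt: "(transpose :: real^'n^'n \<Rightarrow> real^'n^'n) \<in> P \<rightarrow>\<^sub>M borel"
    by (intro meas_P_borel') simp
  interpret nu: prob_space \<nu> unfolding \<nu>_def by (rule prob_space_distr[OF mt])
  have s\<nu>: "sets \<nu> = sets borel" by (simp add: \<nu>_def)
  have AE\<nu>: "AE x in \<nu>. orthogonal_matrix x"
    unfolding \<nu>_def
    by (subst AE_distr_iff[OF mt]) (auto simp: orthogonal_matrix_transpose AE_orth intro: AE_mp[OF AE_orth])
  have d1: "distr \<nu> borel (\<lambda>x. x ** y) = \<nu>" if "orthogonal_matrix y" for y
  proof -
    have "distr \<nu> borel (\<lambda>x. x ** y) = distr P borel ((\<lambda>x. x ** y) \<circ> transpose)"
      unfolding \<nu>_def by (rule distr_distr) (auto intro: mt)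
    also have "\<dots> = distr P borel (transpose \<circ> (\<lambda>x. transpose y ** x))"
      by (simp add: o_def matrix_transpose_mul)
    also have "\<dots> = distr (distr P borel (\<lambda>x. transpose y ** x)) borel transpose"
      by (rule distr_distr[symmetric]) (auto intro: meas_P_borel')
    also have "\<dots> = \<nu>" using linv[of "transpose y"] that by (simp add: \<nu>_def orthogonal_matrix_transpose)
    finally show ?thesis .
  qed
  have eqB: "emeasure P B = emeasure \<nu> B" if B: "B \<in> sets borel" for B
  proof -
    interpret pair_sigma_finite \<nu> P
      by (intro pair_sigma_finite.intro nu.sigma_finite_measure_axioms sigma_finite_measure_axioms)
    have sp: "sets (\<nu> \<Otimes>\<^sub>M P) = sets (borel::((real^'n^'n) \<times> (real^'n^'n)) measure)"
      using sets_pair_measure_cong[OF s\<nu> sP] by (simp only: borel_prod)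
    have mf: "(\<lambda>z. indicator B (fst z ** snd z) :: ennreal) \<in> borel_measurable (\<nu> \<Otimes>\<^sub>M P)"
      by (subst measurable_cong_sets[OF sp refl]) (rule measurable_compose[OF meas_mult_pair borel_measurable_indicator[OF B]])
    have mf2: "(\<lambda>(x,y). indicator B (x ** y) :: ennreal) \<in> borel_measurable (\<nu> \<Otimes>\<^sub>M P)"
      using mf by (simp add: case_prod_beta')
    have "(\<integral>\<^sup>+y. \<integral>\<^sup>+x. indicator B (x ** y) \<partial>\<nu> \<partial>P) = (\<integral>\<^sup>+x. \<integral>\<^sup>+y. indicator B (x ** y) \<partial>P \<partial>\<nu>)"
      by (rule Fubini'[OF mf2])
    also have "\<dots> = (\<integral>\<^sup>+x. emeasure P B \<partial>\<nu>)"
    proof (rule nn_integral_cong_AE)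
      show "AE x in \<nu>. (\<integral>\<^sup>+y. indicator B (x ** y) \<partial>P) = emeasure P B"
        using AE\<nu>
      proof (rule AE_mp, intro AE_I2 impI)
        fix x :: "real^'n^'n" assume "orthogonal_matrix x"
        then show "(\<integral>\<^sup>+y. indicator B (x ** y) \<partial>P) = emeasure P B"
          using ind_distr[OF sP meas_lmult B, of x] linv by simp
      qed
    qed
    also have "\<dots> = emeasure P B" by (simp add: nu.emeasure_space_1)
    finally have 1: "(\<integral>\<^sup>+y. \<integral>\<^sup>+x. indicator B (x ** y) \<partial>\<nu> \<partial>P) = emeasure P B" .
    have "(\<integral>\<^sup>+y. \<integral>\<^sup>+x. indicator B (x ** y) \<partial>\<nu> \<partial>P) = (\<integral>\<^sup>+y. emeasure \<nu> B \<partial>P)"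
    proof (rule nn_integral_cong_AE)
      show "AE y in P. (\<integral>\<^sup>+x. indicator B (x ** y) \<partial>\<nu>) = emeasure \<nu> B"
        using AE_orth
      proof (rule AE_mp, intro AE_I2 impI)
        fix y :: "real^'n^'n" assume "orthogonal_matrix y"
        then show "(\<integral>\<^sup>+x. indicator B (x ** y) \<partial>\<nu>) = emeasure \<nu> B"
          using ind_distr[OF s\<nu> meas_rmult B, of y] d1 by simp
      qed
    qed
    also have "\<dots> = emeasure \<nu> B" by (simp add: emeasure_space_1)
    finally show ?thesis using 1 by simp
  qed
  have "\<nu> = P"
    by (rule measure_eqI) (auto simp: s\<nu> sP eqB)
  then show ?thesis by (simp add: \<nu>_def)
qed

lemma rinv: "orthogonal_matrix T \<Longrightarrow> distr P borel (\<lambda>R. R ** T) = P"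
proof -
  assume T: "orthogonal_matrix T"
  have mt: "(transpose :: real^'n^'n \<Rightarrow> real^'n^'n) \<in> P \<rightarrow>\<^sub>M borel"
    by (intro meas_P_borel') simp
  have "distr P borel (\<lambda>R. R ** T) = distr (distr P borel transpose) borel (\<lambda>R. R ** T)"
    by (simp add: tinv)
  also have "\<dots> = distr P borel ((\<lambda>R. R ** T) \<circ> transpose)"
    by (rule distr_distr) (auto intro: mt)
  also have "\<dots> = distr P borel (transpose \<circ> (\<lambda>x. transpose T ** x))"
    by (simp add: o_def matrix_transpose_mul)
  also have "\<dots> = distr (distr P borel (\<lambda>x. transpose T ** x)) borel transpose"
    by (rule distr_distr[symmetric]) (auto intro: meas_P_borel')
  also have "\<dots> = P" using linv[of "transpose T"] T by (simp add: orthogonal_matrix_transpose tinv)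
  finally show ?thesis .
qed

end


(* ---- L6 ---- *)


lemma int_vec_dist:
  fixes u v :: "real^'n"
  assumes "u \<in> int_vecs" "v \<in> int_vecs" "u \<noteq> v"
  shows "1 \<le> norm (u - v)"
proof -
  obtain i where i: "u $ i \<noteq> v $ i" using assms(3) by (auto simp: vec_eq_iff)
  obtain a where a: "u $ i = of_int a" using assms(1) by (auto simp: int_vecs_def elim!: Ints_cases)
  obtain b where b: "v $ i = of_int b" using assms(2) by (auto simp: int_vecs_def elim!: Ints_cases)
  have "a \<noteq> b" using i a b by auto
  then have "1 \<le> \<bar>of_int a - of_int b :: real\<bar>" by linarith
  also have "\<dots> = \<bar>(u - v) $ i\<bar>" using a b by simp
  also have "\<dots> \<le> norm (u - v)" by (rule component_le_norm_cart)
  finally show ?thesis .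
qed

lemma zero_int_vec: "0 \<in> int_vecs" by (simp add: int_vecs_def)

lemma omega_pos: "omega TYPE('n::finite) > 0"
  unfolding omega_def using content_ball_pos[of 1 "0::real^'n"] by simp

lemma ball_measure: "r \<ge> 0 \<Longrightarrow> measure lborel (ball (c::real^'n) r) = r ^ CARD('n) * omega TYPE('n)"
  unfolding omega_def using content_ball_conv_unit_ball[of r c] by simp

lemma cball_measure: "r \<ge> 0 \<Longrightarrow> measure lborel (cball (c::real^'n) r) = r ^ CARD('n) * omega TYPE('n)"
  using ball_measure[of r c] content_cball_conv_ball[of c r] by simp

lemma arith_pow:
  fixes m :: real
  assumes "m \<ge> 1" "d \<ge> 1"
  shows "(2*m+1)^d - 1 \<le> 2 * real d * 3^(d-1) * m^d"
proof -
  have "(2*m+1)^d - 1 = (2*m) * (\<Sum>i<d. (2*m+1)^i)"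
    using power_diff_1_eq[of "2*m+1" d] by simp
  also have "(\<Sum>i<d. (2*m+1)^i) \<le> (\<Sum>i<d. (3*m)^(d-1))"
  proof (rule sum_mono)
    fix i assume "i \<in> {..<d}"
    then have "i \<le> d - 1" by auto
    have "(2*m+1)^i \<le> (3*m)^i" using assms by (intro power_mono) auto
    also have "\<dots> \<le> (3*m)^(d-1)" using assms \<open>i \<le> d - 1\<close> by (intro power_increasing) auto
    finally show "(2*m+1)^i \<le> (3*m)^(d-1)" .
  qed
  then have "(2*m) * (\<Sum>i<d. (2*m+1)^i) \<le> (2*m) * (real d * (3*m)^(d-1))"
    using assms by (intro mult_left_mono) auto
  also have "\<dots> = 2 * real d * 3^(d-1) * (m * m^(d-1))" by (simp add: power_mult_distrib)
  also have "m * m^(d-1) = m^d" using assms(2) by (metis Suc_diff_1 less_le_trans zero_less_one power_Suc)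
  finally show ?thesis .
qed

lemma packing:
  fixes W :: "(real^'n) set"
  assumes fin: "finite W" and WZ: "W \<subseteq> int_vecs - {0}" and Wm: "\<And>w. w \<in> W \<Longrightarrow> norm w \<le> m" and m: "m \<ge> 1"
  shows "real (card W) \<le> 2 * real CARD('n) * 3^(CARD('n)-1) * m^CARD('n)"
proof -
  define W0 where "W0 = insert 0 W"
  have fin0: "finite W0" using fin by (simp add: W0_def)
  have "0 \<notin> W" using WZ by auto
  then have card0: "card W0 = card W + 1" using fin by (simp add: W0_def)
  have W0Z: "W0 \<subseteq> int_vecs" using WZ zero_int_vec by (auto simp: W0_def)
  have W0m: "norm w \<le> m" if "w \<in> W0" for w using that Wm m by (auto simp: W0_def)
  have disj: "disjoint_family_on (\<lambda>w. ball w (1/2)) W0"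
  proof (unfold disjoint_family_on_def, intro ballI impI)
    fix u v assume uv: "u \<in> W0" "v \<in> W0" "u \<noteq> v"
    have d1: "1 \<le> norm (u - v)" using int_vec_dist[of u v] uv W0Z by auto
    show "ball u (1/2) \<inter> ball v (1/2) = {}"
    proof (rule ccontr)
      assume "ball u (1/2) \<inter> ball v (1/2) \<noteq> {}"
      then obtain x where "dist u x < 1/2" "dist v x < 1/2" by auto
      then have "norm (u - v) < 1" using dist_triangle[of u v x] norm_minus_commute[of x v] by (simp add: dist_norm dist_commute)
      with d1 show False by simp
    qed
  qed
  have fin_b: "emeasure lborel (ball (w::real^'n) (1/2)) \<noteq> \<infinity>" for w
    using emeasure_lborel_ball_finite[of w "1/2"] by simp
  have "measure lborel (\<Union>w\<in>W0. ball w (1/2)) = (\<Sum>w\<in>W0. measure lborel (ball w (1/2::real)))"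
    using fin0 disj fin_b by (intro measure_finite_Union) auto
  also have "\<dots> = real (card W0) * ((1/2)^CARD('n) * omega TYPE('n))"
    by (simp add: ball_measure)
  finally have eq: "measure lborel (\<Union>w\<in>W0. ball w (1/2)) = real (card W0) * ((1/2)^CARD('n) * omega TYPE('n))" .
  have sub: "(\<Union>w\<in>W0. ball w (1/2)) \<subseteq> ball 0 (m + 1/2)"
  proof
    fix x assume "x \<in> (\<Union>w\<in>W0. ball w (1/2))"
    then obtain w where w: "w \<in> W0" "dist w x < 1/2" by auto
    have "norm x \<le> norm w + dist w x" using norm_triangle_ineq[of w "x - w"] by (simp add: dist_norm norm_minus_commute)
    then show "x \<in> ball 0 (m + 1/2)" using W0m[OF w(1)] w(2) by simp
  qed
  have "measure lborel (\<Union>w\<in>W0. ball w (1/2)) \<le> measure lborel (ball (0::real^'n) (m + 1/2))"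
    using sub emeasure_lborel_ball_finite[of "0::real^'n" "m + 1/2"]
    by (intro measure_mono_fmeasurable) (auto simp: fmeasurable_def intro!: borel_open)
  also have "\<dots> = (m + 1/2)^CARD('n) * omega TYPE('n)" using m by (simp add: ball_measure)
  finally have "real (card W0) * ((1/2)^CARD('n) * omega TYPE('n)) \<le> (m + 1/2)^CARD('n) * omega TYPE('n)"
    using eq by simp
  then have "real (card W0) * (1/2)^CARD('n) \<le> (m + 1/2)^CARD('n)"
    using omega_pos[where 'n='n] by (simp add: mult.assoc[symmetric])
  then have "real (card W0) * (1/2)^CARD('n) * 2^CARD('n) \<le> (m + 1/2)^CARD('n) * 2^CARD('n)"
    by (intro mult_right_mono) auto
  then have "real (card W0) \<le> (2*m+1)^CARD('n)"
    by (simp add: power_mult_distrib[symmetric] algebra_simps)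
  then have "real (card W) \<le> (2*m+1)^CARD('n) - 1" using card0 by simp
  also have "\<dots> \<le> 2 * real CARD('n) * 3^(CARD('n)-1) * m^CARD('n)"
    using arith_pow[OF m, of "CARD('n)"] by simp
  finally show ?thesis .
qed


(* ---- L7 ---- *)


abbreviation "Kc TYPE('n::finite) \<equiv> 2 * real CARD('n) * 3^(CARD('n)-1) / omega TYPE('n)"

lemma count_L0:
  fixes U :: "(real^'n) set"
  assumes rad: "\<And>x y. x \<in> U \<Longrightarrow> norm y \<le> norm x \<Longrightarrow> y \<in> U" and U: "U \<in> sets borel"
    and fin: "finite W" and WU: "W \<subseteq> U \<inter> (int_vecs - {0})"
  shows "ennreal (real (card W)) \<le> ennreal (Kc TYPE('n)) * emeasure lborel U"
proof (cases "W = {}")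
  case True then show ?thesis by simp
next
  case False
  define m where "m = Max (norm ` W)"
  have "m \<in> norm ` W" unfolding m_def using fin False by (intro Max_in) auto
  then obtain w0 where w0: "w0 \<in> W" "norm w0 = m" by auto
  have Wm: "norm w \<le> m" if "w \<in> W" for w using fin that by (auto simp: m_def)
  have "1 \<le> norm (w0 - 0)" using int_vec_dist[of w0 0] w0 WU zero_int_vec by auto
  then have m1: "m \<ge> 1" using w0 by simp
  have cU: "cball 0 m \<subseteq> U"
  proof
    fix y :: "real^'n" assume "y \<in> cball 0 m"
    then have "norm y \<le> norm w0" using w0 by auto
    then show "y \<in> U" using rad[of w0 y] w0 WU by auto
  qed
  have om: "omega TYPE('n) > 0" by (rule omega_pos)
  have "real (card W) \<le> 2 * real CARD('n) * 3^(CARD('n)-1) * m^CARD('n)"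
    using packing[OF fin _ Wm m1] WU by auto
  also have "\<dots> = Kc TYPE('n) * measure lborel (cball (0::real^'n) m)"
    using m1 om by (simp add: cball_measure)
  finally have le: "real (card W) \<le> Kc TYPE('n) * measure lborel (cball (0::real^'n) m)" .
  have "ennreal (real (card W)) \<le> ennreal (Kc TYPE('n) * measure lborel (cball (0::real^'n) m))"
    using le by (rule ennreal_leI)
  also have "\<dots> = ennreal (Kc TYPE('n)) * emeasure lborel (cball (0::real^'n) m)"
  proof -
    have "ennreal (Kc TYPE('n) * measure lborel (cball (0::real^'n) m)) =
          ennreal (Kc TYPE('n)) * ennreal (measure lborel (cball (0::real^'n) m))"
      using om by (intro ennreal_mult) auto
    also have "ennreal (measure lborel (cball (0::real^'n) m)) = emeasure lborel (cball (0::real^'n) m)"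
      using emeasure_lborel_cball_finite[of "0::real^'n" m] by (simp add: emeasure_eq_ennreal_measure less_top)
    finally show ?thesis .
  qed
  also have "\<dots> \<le> ennreal (Kc TYPE('n)) * emeasure lborel U"
    using cU U by (intro mult_left_mono emeasure_mono) auto
  finally show ?thesis .
qed

lemma count_L:
  fixes U :: "(real^'n) set"
  assumes rad: "\<And>x y. x \<in> U \<Longrightarrow> norm y \<le> norm x \<Longrightarrow> y \<in> U" and U: "U \<in> sets borel"
  shows "emeasure (count_space (int_vecs - {0})) (U \<inter> (int_vecs - {0})) \<le> ennreal (Kc TYPE('n)) * emeasure lborel U"
proof (cases "finite (U \<inter> (int_vecs - {0}))")
  case True
  then show ?thesis
    using count_L0[OF rad U True] by (simp add: ennreal_of_nat_eq_real_of_nat)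
next
  case False
  have "ennreal (Kc TYPE('n)) * emeasure lborel U = \<infinity>"
  proof (rule ccontr)
    assume "ennreal (Kc TYPE('n)) * emeasure lborel U \<noteq> \<infinity>"
    then obtain x where x: "ennreal (Kc TYPE('n)) * emeasure lborel U = ennreal x" "0 \<le> x"
      by (cases "ennreal (Kc TYPE('n)) * emeasure lborel U") auto
    obtain W where W: "finite W" "card W = nat (ceiling x) + 1" "W \<subseteq> U \<inter> (int_vecs - {0})"
      using infinite_arbitrarily_large[OF False] by blast
    have "ennreal (real (card W)) \<le> ennreal x" using count_L0[OF rad U W(1,3)] x by simp
    then have "real (card W) \<le> x" using x(2) by simp
    moreover have "real (card W) > x" using W(2) by linarith
    ultimately show False by simp
  qed
  then show ?thesis by simp
qed


(* ---- L8 ---- *)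


lemma countable_int_vecs: "countable (int_vecs :: (real^'n) set)"
proof -
  have "int_vecs = (\<lambda>f. \<chi> i. of_int (f i)) ` (UNIV :: ('n \<Rightarrow> int) set)"
  proof (intro set_eqI iffI)
    fix u :: "real^'n" assume "u \<in> int_vecs"
    then have "\<forall>i. \<exists>k::int. u $ i = of_int k" by (auto simp: int_vecs_def elim!: Ints_cases)
    then obtain f where "\<forall>i. u $ i = of_int (f i)" by metis
    then show "u \<in> (\<lambda>f. \<chi> i. of_int (f i)) ` UNIV" by (auto simp: vec_eq_iff intro!: image_eqI[of _ _ f])
  qed (auto simp: int_vecs_def)
  moreover have "countable (UNIV :: ('n \<Rightarrow> int) set)"
  proof -
    have "countable (PiE (UNIV::'n set) (\<lambda>_. UNIV::int set))" by (rule countable_PiE) auto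
    moreover have "PiE (UNIV::'n set) (\<lambda>_. UNIV::int set) = UNIV" by (simp add: PiE_UNIV_domain)
    ultimately show ?thesis by simp
  qed
  ultimately show ?thesis by (metis countable_image)
qed

lemma layer_sum:
  fixes G :: "real^'n \<Rightarrow> real"
  assumes Gm[measurable]: "G \<in> borel_measurable borel" and G0: "\<And>x. 0 \<le> G x"
    and rad: "\<And>x y. norm y \<le> norm x \<Longrightarrow> G x \<le> G y"
  shows "(\<integral>\<^sup>+u. ennreal (G u) \<partial>count_space (int_vecs - {0})) \<le> ennreal (Kc TYPE('n)) * (\<integral>\<^sup>+x. ennreal (G x) \<partial>lborel)"
proof -
  let ?Z = "int_vecs - {0} :: (real^'n) set"
  have cZ: "countable ?Z" using countable_int_vecs by auto
  have lc: "ennreal (G y) = (\<integral>\<^sup>+t. indicator {0..<G y} t \<partial>lborel)" for y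
    using G0[of y] by simp
  have "(\<integral>\<^sup>+u. ennreal (G u) \<partial>count_space ?Z) = (\<integral>\<^sup>+u. \<integral>\<^sup>+t. indicator {0..<G u} t \<partial>lborel \<partial>count_space ?Z)"
    by (simp add: lc[symmetric])
  also have "\<dots> = (\<integral>\<^sup>+t. \<integral>\<^sup>+u. indicator {0..<G u} t \<partial>count_space ?Z \<partial>lborel)"
    by (rule nn_integral_count_space_nn_integral[symmetric, OF cZ]) simp
  also have "\<dots> \<le> (\<integral>\<^sup>+t. ennreal (Kc TYPE('n)) * \<integral>\<^sup>+x. indicator {0..<G x} t \<partial>lborel \<partial>lborel)"
  proof (rule nn_integral_mono)
    fix t :: real
    show "(\<integral>\<^sup>+u. indicator {0..<G u} t \<partial>count_space ?Z) \<le> ennreal (Kc TYPE('n)) * \<integral>\<^sup>+x. indicator {0..<G x} t \<partial>lborel"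
    proof (cases "t < 0")
      case True
      then show ?thesis by simp
    next
      case False
      define U where "U = {x. t < G x}"
      have ind: "indicator {0..<G x} t = (indicator U x :: ennreal)" for x
        using False by (simp add: U_def indicator_def)
      have UB: "U \<in> sets borel" unfolding U_def by measurable
      have radU: "\<And>x y. x \<in> U \<Longrightarrow> norm y \<le> norm x \<Longrightarrow> y \<in> U"
        unfolding U_def using rad by (auto intro: less_le_trans)
      have "(\<integral>\<^sup>+u. indicator {0..<G u} t \<partial>count_space ?Z) = (\<integral>\<^sup>+u. indicator (U \<inter> ?Z) u \<partial>count_space ?Z)"
        using False by (intro nn_integral_cong) (auto simp: U_def indicator_def)
      also have "\<dots> = emeasure (count_space ?Z) (U \<inter> ?Z)"
        by (rule nn_integral_indicator) auto
      also have "\<dots> \<le> ennreal (Kc TYPE('n)) * emeasure lborel U"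
        by (rule count_L[OF radU UB])
      also have "emeasure lborel U = (\<integral>\<^sup>+x. indicator {0..<G x} t \<partial>lborel)"
        using UB by (simp add: ind)
      finally show ?thesis .
    qed
  qed
  also have "\<dots> = ennreal (Kc TYPE('n)) * (\<integral>\<^sup>+t. \<integral>\<^sup>+x. indicator {0..<G x} t \<partial>lborel \<partial>lborel)"
  proof (rule nn_integral_cmult)
    have eqf: "(\<lambda>(t,x). indicator {0..<G x} t :: ennreal) = indicator {p. 0 \<le> fst p \<and> fst p < G (snd p)}"
      by (auto simp: fun_eq_iff indicator_def)
    have m1: "(\<lambda>p::real \<times> (real^'n). fst p) \<in> borel_measurable (lborel \<Otimes>\<^sub>M lborel)" by measurable
    have m2: "(\<lambda>p::real \<times> (real^'n). G (snd p)) \<in> borel_measurable (lborel \<Otimes>\<^sub>M lborel)"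
      by (rule measurable_compose[OF measurable_snd]) simp
    have "{p::real \<times> (real^'n). 0 \<le> fst p \<and> fst p < G (snd p)} =
      {p \<in> space (lborel \<Otimes>\<^sub>M lborel). (\<lambda>_. 0) p \<le> fst p} \<inter> {p \<in> space (lborel \<Otimes>\<^sub>M lborel). fst p < G (snd p)}"
      by (auto simp: space_pair_measure)
    also have "\<dots> \<in> sets (lborel \<Otimes>\<^sub>M lborel)"
      by (intro sets.Int borel_measurable_le borel_measurable_less m1 m2 borel_measurable_const)
    finally have "{p::real \<times> (real^'n). 0 \<le> fst p \<and> fst p < G (snd p)} \<in> sets (lborel \<Otimes>\<^sub>M lborel)" .
    then have mf: "(\<lambda>(t,x). indicator {0..<G x} t :: ennreal) \<in> borel_measurable (lborel \<Otimes>\<^sub>M lborel)"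
      unfolding eqf by (rule borel_measurable_indicator)
    show "(\<lambda>t. \<integral>\<^sup>+x. indicator {0..<G x} t \<partial>lborel) \<in> borel_measurable lborel"
      by (rule lborel.borel_measurable_nn_integral[OF mf])
  qed
  also have "(\<integral>\<^sup>+t. \<integral>\<^sup>+x. indicator {0..<G x} t \<partial>lborel \<partial>lborel) = (\<integral>\<^sup>+x. \<integral>\<^sup>+t. indicator {0..<G x} t \<partial>lborel \<partial>lborel)"
  proof -
    have eqf: "(\<lambda>(x,t). indicator {0..<G x} t :: ennreal) = indicator {p. 0 \<le> snd p \<and> snd p < G (fst p)}"
      by (auto simp: fun_eq_iff indicator_def)
    have m1: "(\<lambda>p::(real^'n) \<times> real. snd p) \<in> borel_measurable (lborel \<Otimes>\<^sub>M lborel)" by measurable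
    have m2: "(\<lambda>p::(real^'n) \<times> real. G (fst p)) \<in> borel_measurable (lborel \<Otimes>\<^sub>M lborel)"
      by (rule measurable_compose[OF measurable_fst]) simp
    have "{p::(real^'n) \<times> real. 0 \<le> snd p \<and> snd p < G (fst p)} =
      {p \<in> space (lborel \<Otimes>\<^sub>M lborel). (\<lambda>_. 0) p \<le> snd p} \<inter> {p \<in> space (lborel \<Otimes>\<^sub>M lborel). snd p < G (fst p)}"
      by (auto simp: space_pair_measure)
    also have "\<dots> \<in> sets (lborel \<Otimes>\<^sub>M lborel)"
      by (intro sets.Int borel_measurable_le borel_measurable_less m1 m2 borel_measurable_const)
    finally have "{p::(real^'n) \<times> real. 0 \<le> snd p \<and> snd p < G (fst p)} \<in> sets (lborel \<Otimes>\<^sub>M lborel)" .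
    then have mf: "(\<lambda>(x,t). indicator {0..<G x} t :: ennreal) \<in> borel_measurable (lborel \<Otimes>\<^sub>M lborel)"
      unfolding eqf by (rule borel_measurable_indicator)
    show ?thesis by (rule lborel_pair.Fubini'[OF mf])
  qed
  also have "\<dots> = (\<integral>\<^sup>+x. ennreal (G x) \<partial>lborel)"
    by (simp add: lc[symmetric])
  finally show ?thesis .
qed


(* ---- L9 ---- *)


lemma cont_quad: "continuous_on UNIV (\<lambda>x::real^'n. x \<bullet> (A *v x))"
  unfolding inner_vec_def matrix_vector_mult_def
  by (intro continuous_intros)

lemma closed_ellipsoid: "closed {x::real^'n. x \<bullet> (A *v x) \<le> r^2}"
  by (rule closed_Collect_le[OF cont_quad continuous_on_const])

lemma cont_mv2: "continuous_on UNIV (\<lambda>z :: (real^'n) \<times> (real^'n^'m). snd z *v fst z)"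
  unfolding matrix_vector_mult_def
  by (intro continuous_on_vec_lambda continuous_intros)

lemma cont_mv1: "continuous_on UNIV (\<lambda>R :: real^'n^'m. R *v x)"
  unfolding matrix_vector_mult_def
  by (intro continuous_on_vec_lambda continuous_intros)

lemma quad_nonneg: "sym_posdef A \<Longrightarrow> 0 \<le> x \<bullet> (A *v x)"
  by (cases "x = 0") (auto simp: sym_posdef_def intro: less_imp_le)

lemma transformed_posdef:
  fixes A R :: "real^'n^'n"
  assumes A: "sym_posdef A" "det A = 1" and R: "orthogonal_matrix R"
  shows "sym_posdef (transpose R ** A ** R)" "det (transpose R ** A ** R) = 1"
    and "\<And>x. (R *v x) \<bullet> (A *v (R *v x)) = x \<bullet> ((transpose R ** A ** R) *v x)"
proof -
  show q: "(R *v x) \<bullet> (A *v (R *v x)) = x \<bullet> ((transpose R ** A ** R) *v x)" for x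
    by (simp add: matrix_vec_inner_transpose matrix_vector_mul_assoc[symmetric])
  have symA: "transpose A = A" using A by (simp add: sym_posdef_def)
  have RtR: "transpose R ** R = mat 1" using R by (simp add: orthogonal_matrix)
  have inj: "R *v x \<noteq> 0" if "x \<noteq> 0" for x
  proof
    assume "R *v x = 0"
    then have "transpose R *v (R *v x) = 0" by simp
    then have "x = 0" by (simp add: matrix_vector_mul_assoc RtR)
    with that show False by simp
  qed
  show "sym_posdef (transpose R ** A ** R)"
    unfolding sym_posdef_def
  proof (intro conjI allI impI)
    show "transpose (transpose R ** A ** R) = transpose R ** A ** R"
      by (simp add: matrix_transpose_mul symA matrix_mul_assoc)
    fix x :: "real^'n" assume "x \<noteq> 0"
    then have "0 < (R *v x) \<bullet> (A *v (R *v x))" using A inj by (auto simp: sym_posdef_def)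
    then show "0 < x \<bullet> ((transpose R ** A ** R) *v x)" by (simp add: q)
  qed
  have "det R = 1 \<or> det R = -1" by (rule det_orthogonal_matrix[OF R])
  then show "det (transpose R ** A ** R) = 1" using A by (auto simp: det_mul)
qed

context haarP
begin

lemma spaceP: "space P = UNIV"
  using sets_eq_imp_space_eq[OF sP] by simp

lemma main_bound:
  fixes A :: "real^'n^'n" and r :: real
  assumes A: "sym_posdef A" "det A = 1" and r: "r > 0"
  defines "E \<equiv> {x::real^'n. x \<bullet> (A *v x) \<le> r^2}"
  shows "emeasure P (\<Union>u\<in>int_vecs - {0}. {R. R *v u \<in> E})
           \<le> ennreal (2 * real CARD('n) * 3^(CARD('n)-1) * r^CARD('n))"
proof -
  interpret prob_space P by (rule prob)
  let ?Z = "int_vecs - {0} :: (real^'n) set"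
  define S where "S x = {R :: real^'n^'n. R *v x \<in> E}" for x
  define G where "G x = measure P (S x)" for x
  have EB: "E \<in> sets borel" unfolding E_def using closed_ellipsoid by (intro borel_closed) 
  have SB: "S x \<in> sets P" for x
  proof -
    have "(\<lambda>R :: real^'n^'n. R *v x) \<in> borel_measurable borel"
      by (rule borel_measurable_continuous_onI[OF cont_mv1])
    then have "(\<lambda>R :: real^'n^'n. R *v x) -` E \<inter> space borel \<in> sets borel"
      using EB by (rule measurable_sets)
    then show ?thesis by (simp add: S_def sP vimage_def)
  qed
  have eG: "emeasure P (S x) = ennreal (G x)" for x
    by (simp add: G_def emeasure_eq_measure)
  \<comment> \<open>(a) union bound\<close>
  have cZ: "countable ?Z" using countable_int_vecs by auto
  have ub: "emeasure P (\<Union>u\<in>?Z. S u) \<le> (\<integral>\<^sup>+u. emeasure P (S u) \<partial>count_space ?Z)"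
  proof -
    have UB: "(\<Union>u\<in>?Z. S u) \<in> sets P" using cZ SB by (intro sets.countable_UN') auto
    have "emeasure P (\<Union>u\<in>?Z. S u) = (\<integral>\<^sup>+R. indicator (\<Union>u\<in>?Z. S u) R \<partial>P)"
      using UB by simp
    also have "\<dots> \<le> (\<integral>\<^sup>+R. \<integral>\<^sup>+u. indicator (S u) R \<partial>count_space ?Z \<partial>P)"
    proof (rule nn_integral_mono)
      fix R
      show "indicator (\<Union>u\<in>?Z. S u) R \<le> (\<integral>\<^sup>+u. indicator (S u) R \<partial>count_space ?Z)"
      proof (cases "R \<in> (\<Union>u\<in>?Z. S u)")
        case True
        then obtain u0 where u0: "u0 \<in> ?Z" "R \<in> S u0" by auto
        have "(\<integral>\<^sup>+u. indicator (S u) R * indicator {u0} u \<partial>count_space ?Z) \<le> (\<integral>\<^sup>+u. indicator (S u) R \<partial>count_space ?Z)"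
          by (intro nn_integral_mono) (auto simp: indicator_def)
        moreover have "(\<integral>\<^sup>+u. indicator (S u) R * indicator {u0} u \<partial>count_space ?Z) = 1"
          using u0 by (subst nn_integral_indicator_singleton) auto
        ultimately show ?thesis using True by simp
      qed simp
    qed
    also have "\<dots> = (\<integral>\<^sup>+u. \<integral>\<^sup>+R. indicator (S u) R \<partial>P \<partial>count_space ?Z)"
      using SB by (intro nn_integral_count_space_nn_integral cZ) auto
    also have "\<dots> = (\<integral>\<^sup>+u. emeasure P (S u) \<partial>count_space ?Z)"
      using SB by (intro nn_integral_cong) simp
    finally show ?thesis .
  qed
  \<comment> \<open>(b) measurability of G\<close>
  define Q where "Q = {z :: (real^'n) \<times> (real^'n^'n). snd z *v fst z \<in> E}"
  have spB: "sets ((borel :: (real^'n) measure) \<Otimes>\<^sub>M P) = sets (borel :: ((real^'n) \<times> (real^'n^'n)) measure)"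
    using sets_pair_measure_cong[of "borel::(real^'n) measure" "borel::(real^'n) measure", OF refl sP] by (simp only: borel_prod)
  have QB: "Q \<in> sets ((borel :: (real^'n) measure) \<Otimes>\<^sub>M P)"
  proof -
    have "(\<lambda>z :: (real^'n) \<times> (real^'n^'n). snd z *v fst z) \<in> borel_measurable borel"
      by (rule borel_measurable_continuous_onI[OF cont_mv2])
    then have "(\<lambda>z :: (real^'n) \<times> (real^'n^'n). snd z *v fst z) -` E \<inter> space borel \<in> sets borel"
      using EB by (rule measurable_sets)
    then show ?thesis unfolding spB by (simp add: Q_def vimage_def)
  qed
  have GM: "G \<in> borel_measurable borel"
  proof -
    have "(\<lambda>x. emeasure P (Pair x -` Q)) \<in> borel_measurable borel"
      by (rule measurable_emeasure_Pair[OF QB])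
    then have "(\<lambda>x. enn2real (emeasure P (Pair x -` Q))) \<in> borel_measurable borel"
      by (rule borel_measurable_enn2real)
    moreover have "Pair x -` Q = S x" for x by (auto simp: Q_def S_def)
    moreover have "G = (\<lambda>x. enn2real (emeasure P (S x)))" by (simp add: fun_eq_iff G_def measure_def)
    ultimately show ?thesis by simp
  qed
  \<comment> \<open>(c) radial monotonicity\<close>
  have rot: "G (T *v y) = G y" if T: "orthogonal_matrix T" for T y
  proof -
    have "S (T *v y) = (\<lambda>R. R ** T) -` S y \<inter> space P"
      by (auto simp: S_def spaceP matrix_vector_mul_assoc)
    then have "G (T *v y) = measure P ((\<lambda>R. R ** T) -` S y \<inter> space P)" by (simp add: G_def)
    also have "\<dots> = measure (distr P borel (\<lambda>R. R ** T)) (S y)"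
      using SB[of y] by (intro measure_distr[symmetric] meas_P_borel') (auto simp: sP)
    also have "\<dots> = G y" using rinv[OF T] by (simp add: G_def)
    finally show ?thesis .
  qed
  have samenorm: "G x = G y" if nxy: "norm x = norm y" for x y
  proof -
    obtain f where f: "orthogonal_transformation f" "f y = x"
      using orthogonal_transformation_exists[of y x, OF nxy[symmetric]] by metis
    have "linear f" "orthogonal_matrix (matrix f)" using f(1) by (auto simp: orthogonal_transformation_matrix)
    moreover have "matrix f *v y = x" using f \<open>linear f\<close> by (simp add: matrix_works)
    ultimately show ?thesis using rot[of "matrix f" y] by simp
  qed
  have scale: "G x \<le> G (t *\<^sub>R x)" if t: "0 \<le> t" "t \<le> 1" for t x
  proof -
    have "S x \<subseteq> S (t *\<^sub>R x)"
    proof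
      fix R assume "R \<in> S x"
      then have v: "(R *v x) \<bullet> (A *v (R *v x)) \<le> r^2" by (simp add: S_def E_def)
      have nn: "0 \<le> (R *v x) \<bullet> (A *v (R *v x))" by (rule quad_nonneg[OF A(1)])
      have "(R *v (t *\<^sub>R x)) \<bullet> (A *v (R *v (t *\<^sub>R x))) = t^2 * ((R *v x) \<bullet> (A *v (R *v x)))"
        by (simp add: matrix_vector_mult_scaleR power2_eq_square)
      also have "\<dots> \<le> 1 * ((R *v x) \<bullet> (A *v (R *v x)))"
        using t nn by (intro mult_right_mono) (auto simp: power_le_one)
      finally show "R \<in> S (t *\<^sub>R x)" using v by (simp add: S_def E_def)
    qed
    then show ?thesis unfolding G_def using SB by (intro finite_measure_mono) auto
  qed
  have radG: "G x \<le> G y" if "norm y \<le> norm x" for x y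
  proof (cases "x = 0")
    case True then show ?thesis using that by simp
  next
    case False
    define t where "t = norm y / norm x"
    have t: "0 \<le> t" "t \<le> 1" using False that by (auto simp: t_def)
    have "norm (t *\<^sub>R x) = norm y" using False t by (simp add: t_def)
    then show ?thesis using scale[OF t, of x] samenorm[of "t *\<^sub>R x" y] by simp
  qed
  \<comment> \<open>(d) layer cake\<close>
  have ls: "(\<integral>\<^sup>+u. ennreal (G u) \<partial>count_space ?Z) \<le> ennreal (Kc TYPE('n)) * (\<integral>\<^sup>+x. ennreal (G x) \<partial>lborel)"
    by (rule layer_sum[OF GM]) (auto simp: G_def intro: radG[unfolded G_def])
  \<comment> \<open>(e) volume computation\<close>
  have vol: "(\<integral>\<^sup>+x. ennreal (G x) \<partial>lborel) = ennreal (r ^ CARD('n) * omega TYPE('n))"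
  proof -
    interpret pl: pair_sigma_finite "lborel :: (real^'n) measure" P
      by (intro pair_sigma_finite.intro lborel.sigma_finite_measure_axioms sigma_finite_measure_axioms)
    have spL: "sets ((lborel :: (real^'n) measure) \<Otimes>\<^sub>M P) = sets (borel :: ((real^'n) \<times> (real^'n^'n)) measure)"
      using sets_pair_measure_cong[of "lborel::(real^'n) measure" "borel::(real^'n) measure", OF sets_lborel sP]
      by (simp only: borel_prod)
    have mf: "(\<lambda>(x,R). indicator E (R *v x) :: ennreal) \<in> borel_measurable ((lborel :: (real^'n) measure) \<Otimes>\<^sub>M P)"
    proof -
      have "(\<lambda>z :: (real^'n) \<times> (real^'n^'n). indicator E (snd z *v fst z) :: ennreal) \<in> borel_measurable borel"
        by (rule measurable_compose[OF borel_measurable_continuous_onI[OF cont_mv2] borel_measurable_indicator[OF EB]])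
      then show ?thesis by (subst measurable_cong_sets[OF spL refl]) (simp add: case_prod_beta')
    qed
    have "(\<integral>\<^sup>+x. ennreal (G x) \<partial>lborel) = (\<integral>\<^sup>+x. \<integral>\<^sup>+R. indicator E (R *v x) \<partial>P \<partial>lborel)"
    proof (rule nn_integral_cong)
      fix x :: "real^'n"
      have "(\<integral>\<^sup>+R. indicator E (R *v x) \<partial>P) = (\<integral>\<^sup>+R. indicator (S x) R \<partial>P)"
        by (intro nn_integral_cong) (auto simp: S_def indicator_def)
      also have "\<dots> = emeasure P (S x)" using SB by simp
      finally show "ennreal (G x) = (\<integral>\<^sup>+R. indicator E (R *v x) \<partial>P)" by (simp add: eG)
    qed
    also have "\<dots> = (\<integral>\<^sup>+R. \<integral>\<^sup>+x. indicator E (R *v x) \<partial>lborel \<partial>P)"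
      by (rule pl.Fubini'[OF mf, symmetric])
    also have "\<dots> = (\<integral>\<^sup>+R. ennreal (r ^ CARD('n) * omega TYPE('n)) \<partial>P)"
    proof (rule nn_integral_cong_AE)
      show "AE R in P. (\<integral>\<^sup>+x. indicator E (R *v x) \<partial>lborel) = ennreal (r ^ CARD('n) * omega TYPE('n))"
        using AE_orth
      proof (rule AE_mp, intro AE_I2 impI)
        fix R :: "real^'n^'n" assume R: "orthogonal_matrix R"
        let ?A' = "transpose R ** A ** R"
        have tp: "sym_posdef ?A'" "det ?A' = 1" and qq: "\<And>x. (R *v x) \<bullet> (A *v (R *v x)) = x \<bullet> (?A' *v x)"
          using transformed_posdef[OF A R] by auto
        have seteq: "{x. R *v x \<in> E} = {x. x \<bullet> (?A' *v x) \<le> r^2}"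
          by (auto simp: E_def qq)
        have E'B: "{x::real^'n. x \<bullet> (?A' *v x) \<le> r^2} \<in> sets borel"
          using closed_ellipsoid by (intro borel_closed)
        have lm: "{x. x \<bullet> (?A' *v x) \<le> r^2} \<in> lmeasurable"
          and ms: "measure lebesgue {x. x \<bullet> (?A' *v x) \<le> r^2} = r ^ CARD('n) * omega TYPE('n)"
          using ellipsoid_volume[OF tp, of r] r by auto
        have "(\<integral>\<^sup>+x. indicator E (R *v x) \<partial>lborel) = (\<integral>\<^sup>+x. indicator {x. x \<bullet> (?A' *v x) \<le> r^2} x \<partial>lborel)"
          by (intro nn_integral_cong) (auto simp: indicator_def seteq[symmetric])
        also have "\<dots> = emeasure lborel {x. x \<bullet> (?A' *v x) \<le> r^2}"
          using E'B by simp
        also have "\<dots> = emeasure lebesgue {x. x \<bullet> (?A' *v x) \<le> r^2}"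
          using E'B by simp
        also have "\<dots> = ennreal (measure lebesgue {x. x \<bullet> (?A' *v x) \<le> r^2})"
          using lm by (simp add: emeasure_eq_measure2)
        finally show "(\<integral>\<^sup>+x. indicator E (R *v x) \<partial>lborel) = ennreal (r ^ CARD('n) * omega TYPE('n))"
          by (simp add: ms)
      qed
    qed
    also have "\<dots> = ennreal (r ^ CARD('n) * omega TYPE('n))"
      by (simp add: emeasure_space_1)
    finally show ?thesis .
  qed
  have "emeasure P (\<Union>u\<in>?Z. S u) \<le> ennreal (Kc TYPE('n)) * ennreal (r ^ CARD('n) * omega TYPE('n))"
    using ub ls vol by (simp add: eG)
  also have "\<dots> = ennreal (Kc TYPE('n) * (r ^ CARD('n) * omega TYPE('n)))"
    using omega_pos[where 'n='n] r by (intro ennreal_mult[symmetric]) auto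
  also have "Kc TYPE('n) * (r ^ CARD('n) * omega TYPE('n)) = 2 * real CARD('n) * 3^(CARD('n)-1) * r^CARD('n)"
    using omega_pos[where 'n='n] by simp
  finally have "emeasure P (\<Union>u\<in>?Z. S u) \<le> ennreal (2 * real CARD('n) * 3^(CARD('n)-1) * r^CARD('n))" .
  then show ?thesis by (simp add: S_def)
qed

end


(* ---- T12 ---- *)


lemma omega_le: "omega TYPE('n::finite) \<le> 2 ^ CARD('n)"
proof -
  have sub: "ball (0::real^'n) 1 \<subseteq> cbox (vec (-1)) (vec 1)"
  proof
    fix x :: "real^'n" assume "x \<in> ball 0 1"
    then have "norm x < 1" by simp
    then have "\<bar>x $ i\<bar> < 1" for i using component_le_norm_cart[of x i] by linarith
    then show "x \<in> cbox (vec (-1)) (vec 1)" by (auto simp: mem_box_cart abs_less_iff less_imp_le)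
  qed
  have "omega TYPE('n) \<le> measure lborel (cbox (vec (-1)) (vec 1::real^'n))"
    unfolding omega_def using sub by (intro measure_mono_fmeasurable) auto
  also have "\<dots> = 2 ^ CARD('n)"
  proof -
    have "(0::real^'n) \<in> cbox (vec (-1)) (vec 1)" by (simp add: mem_box_cart)
    then have "cbox (vec (-1)) (vec 1::real^'n) \<noteq> {}" by blast
    then show ?thesis by (simp add: content_cbox_cart)
  qed
  finally show ?thesis .
qed

lemma sqrt_lt_imp: "sqrt q < r \<Longrightarrow> q \<le> r^2"
proof (cases "q < 0")
  case True then show ?thesis by (smt (verit) zero_le_power2)
next
  case False
  assume s: "sqrt q < r"
  have "(sqrt q)^2 < r^2" using False s by (intro power_strict_mono) auto
  then show ?thesis using False by simp
qed

theorem corollary2p2: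
  fixes A :: "real^'n^'n" and P :: "(real^'n^'n) measure" and \<delta> :: real
  assumes "sym_posdef A" and "det A = 1"
    and "haar_orthogonal P"
    and "\<delta> > 0"
  shows "measure P {R. lambda1 (transpose R ** A ** R) \<le> \<delta>}
           \<le> C'_const TYPE('n) * \<delta> ^ CARD('n)"
proof -
  interpret haarP P by unfold_locales (rule assms(3))
  interpret prob_space P by (rule prob)
  define K where "K = 2 * real CARD('n) * 3^(CARD('n)-1)"
  define T where "T = {R::real^'n^'n. lambda1 (transpose R ** A ** R) \<le> \<delta>}"
  have key: "measure P T \<le> K * (\<delta> + \<epsilon>) ^ CARD('n)" if \<epsilon>: "\<epsilon> > 0" for \<epsilon>
  proof -
    define r where "r = \<delta> + \<epsilon>"
    have r: "r > 0" using \<epsilon> assms(4) by (simp add: r_def)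
    define E where "E = {x::real^'n. x \<bullet> (A *v x) \<le> r^2}"
    define U where "U = (\<Union>u\<in>int_vecs - {0}. {R::real^'n^'n. R *v u \<in> E})"
    have EB: "E \<in> sets borel" unfolding E_def using closed_ellipsoid by (intro borel_closed)
    have SB: "{R::real^'n^'n. R *v u \<in> E} \<in> sets P" for u
    proof -
      have "(\<lambda>R :: real^'n^'n. R *v u) \<in> borel_measurable borel"
        by (rule borel_measurable_continuous_onI[OF cont_mv1])
      then have "(\<lambda>R :: real^'n^'n. R *v u) -` E \<inter> space borel \<in> sets borel"
        using EB by (rule measurable_sets)
      then show ?thesis by (simp add: sP vimage_def)
    qed
    have UB: "U \<in> sets P" unfolding U_def
      using countable_int_vecs SB by (intro sets.countable_UN') auto
    have TU: "T \<subseteq> U"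
    proof
      fix R :: "real^'n^'n" assume "R \<in> T"
      then have l: "lambda1 (transpose R ** A ** R) \<le> \<delta>" by (simp add: T_def)
      define M where "M = transpose R ** A ** R"
      define V where "V = {mnorm M u | u. u \<in> int_vecs \<and> u \<noteq> 0}"
      obtain i :: 'n where True by simp
      have "axis i 1 \<in> int_vecs" by (auto simp: int_vecs_def axis_def)
      moreover have "axis i (1::real) \<noteq> 0" by (simp add: axis_eq_0_iff)
      ultimately have Vne: "V \<noteq> {}" by (auto simp: V_def)
      have "Inf V < r" using l \<epsilon> by (simp add: lambda1_def V_def M_def r_def)
      then obtain v where "v \<in> V" "v < r" using cInf_lessD[OF Vne] by blast
      then obtain u where u: "u \<in> int_vecs" "u \<noteq> 0" "sqrt (u \<bullet> (M *v u)) < r"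
        by (auto simp: V_def mnorm_def)
      have "(R *v u) \<bullet> (A *v (R *v u)) = u \<bullet> (M *v u)"
        by (simp add: M_def matrix_vec_inner_transpose matrix_vector_mul_assoc[symmetric])
      then have "R *v u \<in> E" using sqrt_lt_imp[OF u(3)] by (simp add: E_def)
      then show "R \<in> U" using u by (auto simp: U_def)
    qed
    have "emeasure P U \<le> ennreal (K * r ^ CARD('n))"
      unfolding U_def E_def K_def by (rule main_bound[OF assms(1,2) r])
    then have "measure P U \<le> K * r ^ CARD('n)"
      using r by (simp add: emeasure_eq_measure K_def)
    moreover have "measure P T \<le> measure P U" using TU UB by (rule finite_measure_mono)
    ultimately show ?thesis by (simp add: r_def)
  qed
  have lim: "((\<lambda>\<epsilon>. K * (\<delta> + \<epsilon>) ^ CARD('n)) \<longlongrightarrow> K * (\<delta> + 0) ^ CARD('n)) (at_right 0)"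
    by (intro tendsto_intros)
  have "measure P T \<le> K * (\<delta> + 0) ^ CARD('n)"
  proof (rule tendsto_lowerbound[OF lim])
    show "\<forall>\<^sub>F \<epsilon> in at_right 0. measure P T \<le> K * (\<delta> + \<epsilon>) ^ CARD('n)"
      using eventually_at_right_less[of "0::real"] by (rule eventually_mono) (rule key)
  qed simp
  also have "\<dots> \<le> C'_const TYPE('n) * \<delta> ^ CARD('n)"
  proof -
    have om: "omega TYPE('n) > 0" by (rule omega_pos)
    have "1 \<le> C_const TYPE('n)" using omega_le[where 'n='n] om by (simp add: C_const_def)
    moreover have "0 \<le> K" by (simp add: K_def)
    ultimately have "K * 1 \<le> K * C_const TYPE('n)" by (intro mult_left_mono) auto
    then have "K \<le> C'_const TYPE('n)"
      by (simp add: C'_const_def K_def)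
    then show ?thesis using assms(4) by (simp add: mult_right_mono)
  qed
  finally show ?thesis by (simp add: T_def)
qed


end
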